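(* Consider Algorithm PDFPM (described in the context), and let $\bar{x}^k$ be the point computed in Step 2 at some iteration $k$ with current parameter $\sigma_k$. Suppose Assumptions A1, A2 and A3 (described in the context) hold. If $\sigma_k\|\bar{x}^k-x^k\|\ge\epsilon$ and $$\sigma_k\ge\max_{j\in\mathcal{J}}\Big[\frac{5L_j+\overline{B}}{1-\alpha}+\frac{2n^{\frac{1-\beta_j}{2}}M_j+2M_j}{(\beta_j+1)(1-\alpha)}\epsilon^{\beta_j-1}\Big]^{\frac1{\beta_j}},$$ then for all $j\in\mathcal{J}$ $$F_j(\bar{x}^k)\le F_j(x^k)-\frac{\alpha}{2}\sigma_k\|\bar{x}^k-x^k\|^2\quad\text{and}\quad F_j(\bar{x}^k)\le F_j(x^k)-\frac{\alpha\epsilon^2}{2\sigma_k}.$$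
   Context: Setting: $m,n\ge1$, $\mathcal{J}=\{1,\dots,m\}$, $F=(F_1,\dots,F_m)$ with $F_j=f_j+h_j$, where $f_j:\mathbb{R}^n\to\mathbb{R}$ is differentiable and $h_j:\mathbb{R}^n\to\mathbb{R}\cup\{+\infty\}$ is convex. For each $j$ a map $g_{f_j}:\mathbb{R}^n\times[0,1]\to\mathbb{R}^n$ is given with $\lim_{\lambda\to0}g_{f_j}(x,\lambda)=\nabla f_j(x)$. $\|\cdot\|$ is the Euclidean norm (spectral norm for matrices). Algorithm PDFPM: choose $x^0\in\mathbb{R}^n$, $\alpha,\epsilon\in(0,1)$, $\sigma_0\ge1$, symmetric positive semidefinite $B_j^0\in\mathbb{R}^{n\times n}$; set $k=0$. Step 1: choose $0<\lambda_k\le \epsilon/(\sigma_k\sqrt n)$ and compute $g_{f_j}(x^k,\lambda_k)$ for each $j$. Step 2: let $\bar{x}^k$ be the (unique) minimizer of $\Phi_{x^k}(x)+\frac{\sigma_k}{2}\|x-x^k\|^2$, where $\Phi_{x^k}(x)=\max_{j\in\mathcal{J}}[\langle g_{f_j}(x^k,\lambda_k)+\frac12B_j^k(x-x^k),x-x^k\rangle+h_j(x)-h_j(x^k)]$. Step 3: if $\sigma_k\|\bar{x}^k-x^k\|\ge\epsilon$ go to Step 4; otherwise stop. Step 4: if $F_j(\bar{x}^k)\le F_j(x^k)-\frac{\alpha\epsilon^2}{2\sigma_k}$ for all $j\in\mathcal{J}$, set $x^{k+1}=\bar{x}^k$, $\sigma_{k+1}=\sigma_k$, choose symmetric positive semidefinite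 $B_j^{k+1}$, set $k\leftarrow k+1$ and go to Step 1; otherwise replace $\sigma_k$ by $2\sigma_k$ and go to Step 1 (same $k$). Assumption A1: there is $\overline{B}\ge0$ with $\|B_j^k\|\le\overline{B}$ for all iterations $k$ and all $j\in\mathcal{J}$. Assumption A2: for each $j$ there are $L_j,M_j>0$ and $\beta_j\in(0,1]$ with $f_j(y)\le f_j(x)+\langle\nabla f_j(x),y-x\rangle+\frac{L_j}{2}\|y-x\|^2+\frac{M_j}{\beta_j+1}\|y-x\|^{\beta_j+1}$ for all $x,y\in\mathbb{R}^n$. Assumption A3: with the same $L_j,M_j,\beta_j$, $\|\nabla f_j(x)-g_{f_j}(x,\lambda)\|\le\lambda\frac{\sqrt n L_j}{2}+\sqrt n\frac{M_j}{\beta_j+1}\lambda^{\beta_j}$ for all $x$ and all $\lambda\in(0,1]$. *)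

theory Defs
  imports "HOL-Analysis.Analysis" "HOL-Library.Extended_Real"
begin

text \<open>Convexity of an extended-real-valued function h : R^n -> R \<union> {+\<infinity>}
  (h never takes the value -\<infinity>); ereal arithmetic uses 0 * \<infinity> = 0.\<close>
definition ext_convex :: "('a::real_vector \<Rightarrow> ereal) \<Rightarrow> bool" where
  "ext_convex h \<longleftrightarrow> (\<forall>x. h x \<noteq> -\<infinity>) \<and>
     (\<forall>x y t. 0 \<le> t \<and> t \<le> 1 \<longrightarrow>
        h ((1 - t) *\<^sub>R x + t *\<^sub>R y) \<le> ereal (1 - t) * h x + ereal t * h y)"

definition sym_psd :: "real^'n^'n \<Rightarrow> bool" where
  "sym_psd B \<longleftrightarrow> transpose B = B \<and> (\<forall>v. 0 \<le> v \<bullet> (B *v v))"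

definition spec_norm :: "real^'n^'n \<Rightarrow> real" where
  "spec_norm B = onorm (\<lambda>v. B *v v)"

text \<open>The model function \<Phi>_{x^k} of Step 2, with gk j = g_{f_j}(x^k,\<lambda>_k),
  Bk j = B_j^k, index set {1..m}.\<close>
definition Phi :: "nat \<Rightarrow> (nat \<Rightarrow> real^'n) \<Rightarrow> (nat \<Rightarrow> real^'n^'n)
     \<Rightarrow> (nat \<Rightarrow> real^'n \<Rightarrow> ereal) \<Rightarrow> real^'n \<Rightarrow> real^'n \<Rightarrow> ereal" where
  "Phi m gk Bk h xk x =
     (MAX j\<in>{1..m}. ereal ((gk j + (1/2) *\<^sub>R (Bk j *v (x - xk))) \<bullet> (x - xk))
                    + h j x - h j xk)"

end

theory Submission
  imports Defs
begin

lemma real_core: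
  fixes r \<sigma> \<epsilon> \<beta> L M \<alpha> B N lam E K C :: real
  assumes r: "r > 0" and sg: "\<sigma> \<ge> 1" and e: "\<epsilon> > 0" and st: "\<sigma> * r \<ge> \<epsilon>"
    and b: "0 < \<beta>" "\<beta> \<le> 1" and L: "L > 0" and M: "M > 0" and a: "0 < \<alpha>" "\<alpha> < 1"
    and B: "B \<ge> 0" and N: "N \<ge> 1" and lam: "0 < lam" "lam \<le> \<epsilon> / (\<sigma> * sqrt N)"
    and E: "E \<le> lam * (sqrt N * L / 2) + sqrt N * (M / (\<beta> + 1)) * lam powr \<beta>"
    and K: "K = (5 * L + B) / (1 - \<alpha>)
                + (2 * N powr ((1 - \<beta>) / 2) * M + 2 * M)
                  / ((\<beta> + 1) * (1 - \<alpha>)) * \<epsilon> powr (\<beta> - 1)"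
    and sK: "\<sigma> \<ge> K powr (1 / \<beta>)"
  shows "E * r + L / 2 * r^2 + M / (\<beta> + 1) * r powr (\<beta> + 1) \<le> (1 - \<alpha>) / 2 * \<sigma> * r^2"
proof -
  define C where "C = (N powr ((1 - \<beta>) / 2) + 1) * M / (\<beta> + 1)"
  have sN: "sqrt N > 0" using N by simp
  have lr: "lam \<le> r / sqrt N"
  proof -
    have "\<epsilon> / (\<sigma> * sqrt N) \<le> (\<sigma> * r) / (\<sigma> * sqrt N)"
      using st sN sg by (intro divide_right_mono) auto
    also have "\<dots> = r / sqrt N" using sg by simp
    finally show ?thesis using lam by linarith
  qed
  have lp: "lam powr \<beta> \<le> (r / sqrt N) powr \<beta>"
    using lr lam b by (intro powr_mono2) auto
  have e1: "lam * (sqrt N * L / 2) * r \<le> L / 2 * r^2"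
  proof -
    have "lam * sqrt N \<le> r" using lr sN by (simp add: field_simps)
    hence "lam * sqrt N * (L/2 * r) \<le> r * (L/2 * r)" using L r by (intro mult_right_mono) auto
    thus ?thesis by (simp add: power2_eq_square algebra_simps)
  qed
  have sqp: "sqrt N = N powr (1/2)" using N by (simp add: powr_half_sqrt)
  have e2: "sqrt N * (M / (\<beta> + 1)) * lam powr \<beta> * r
      \<le> N powr ((1 - \<beta>) / 2) * M / (\<beta> + 1) * r powr (\<beta> + 1)"
  proof -
    have "sqrt N * (M / (\<beta> + 1)) * lam powr \<beta> * r \<le> sqrt N * (M / (\<beta> + 1)) * (r / sqrt N) powr \<beta> * r"
      using lp M b r sN by (intro mult_right_mono mult_left_mono) auto
    also have "(r / sqrt N) powr \<beta> = r powr \<beta> / N powr (\<beta>/2)"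
      using r N by (simp add: powr_divide sqp powr_powr)
    also have "sqrt N * (M / (\<beta> + 1)) * (r powr \<beta> / N powr (\<beta>/2)) * r
       = (N powr (1/2) / N powr (\<beta>/2)) * M / (\<beta> + 1) * (r powr \<beta> * r powr 1)"
      using r sqp by (simp add: mult_ac)
    also have "N powr (1/2) / N powr (\<beta>/2) = N powr ((1 - \<beta>) / 2)"
      using N by (simp add: powr_diff[symmetric] diff_divide_distrib)
    also have "r powr \<beta> * r powr 1 = r powr (\<beta> + 1)" by (simp add: powr_add)
    finally show ?thesis by simp
  qed
  have Er: "E * r \<le> L / 2 * r^2 + N powr ((1 - \<beta>) / 2) * M / (\<beta> + 1) * r powr (\<beta> + 1)"
  proof -
    have "E * r \<le> (lam * (sqrt N * L / 2) + sqrt N * (M / (\<beta> + 1)) * lam powr \<beta>) * r"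
      using E r by (intro mult_right_mono) auto
    thus ?thesis using e1 e2 by (simp add: algebra_simps)
  qed
  have lhs: "E * r + L / 2 * r^2 + M / (\<beta> + 1) * r powr (\<beta> + 1) \<le> L * r^2 + C * r powr (\<beta> + 1)"
    using Er by (simp add: C_def algebra_simps add_divide_distrib)
  have rsplit: "r powr (\<beta> + 1) = r^2 * r powr (\<beta> - 1)"
  proof -
    have "r powr (\<beta> + 1) = r powr 2 * r powr (\<beta> - 1)" by (simp add: powr_add[symmetric] add.commute)
    thus ?thesis using r by (simp add: powr_realpow)
  qed
  have rp: "r powr (\<beta> - 1) \<le> (\<epsilon> / \<sigma>) powr (\<beta> - 1)"
    using b e sg st by (intro powr_mono2') (auto simp: field_simps)
  have es: "(\<epsilon> / \<sigma>) powr (\<beta> - 1) = \<epsilon> powr (\<beta> - 1) * \<sigma> powr (1 - \<beta>)"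
  proof -
    have "\<sigma> powr (1 - \<beta>) = 1 / \<sigma> powr (\<beta> - 1)"
      using powr_minus_divide[of \<sigma> "\<beta> - 1"] by simp
    thus ?thesis using e sg by (simp add: powr_divide)
  qed
  have Cpos: "C \<ge> 0" using C_def M b by simp
  have Kpos: "K > 0" using K L B a M b e by (auto intro!: add_pos_nonneg divide_nonneg_pos mult_nonneg_nonneg)
  have sb: "\<sigma> powr \<beta> \<ge> K"
  proof -
    have "(K powr (1/\<beta>)) powr \<beta> \<le> \<sigma> powr \<beta>" using sK b Kpos by (intro powr_mono2) auto
    thus ?thesis using b Kpos by (simp add: powr_powr)
  qed
  have s1: "\<sigma> powr (1 - \<beta>) \<ge> 1" using sg b by (simp add: ge_one_powr_ge_zero)
  have ss: "\<sigma> = \<sigma> powr (1 - \<beta>) * \<sigma> powr \<beta>" using sg by (simp add: powr_add[symmetric] add.commute)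
  have main: "2 * L + 2 * C * \<epsilon> powr (\<beta> - 1) * \<sigma> powr (1 - \<beta>) \<le> (1 - \<alpha>) * \<sigma>"
  proof -
    have K': "(1 - \<alpha>) * K = 5 * L + B + 2 * C * \<epsilon> powr (\<beta> - 1)"
    proof -
      have gen: "\<And>P Q. (1 - \<alpha>) * ((5 * L + B) / (1 - \<alpha>) + (2 * Q * M + 2 * M) / ((\<beta> + 1) * (1 - \<alpha>)) * P)
        = 5 * L + B + 2 * ((Q + 1) * M / (\<beta> + 1)) * P"
      proof -
        fix P Q
        have h1: "1 - \<alpha> \<noteq> 0" "\<beta> + 1 \<noteq> 0" "(\<beta> + 1) * (1 - \<alpha>) \<noteq> 0" using a b by auto
        have "(1 - \<alpha>) * ((2 * Q * M + 2 * M) / ((\<beta> + 1) * (1 - \<alpha>)) * P) = 2 * ((Q + 1) * M / (\<beta> + 1)) * P"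
          using h1 by (simp add: field_simps)
        moreover have "(1 - \<alpha>) * ((5 * L + B) / (1 - \<alpha>)) = 5 * L + B" using h1 by simp
        ultimately show "?thesis P Q" by (simp add: distrib_left)
      qed
      show ?thesis unfolding K C_def by (rule gen)
    qed
    have "(1 - \<alpha>) * \<sigma> \<ge> \<sigma> powr (1 - \<beta>) * ((1 - \<alpha>) * K)"
      using ss sb s1 a by (smt (verit) mult.left_commute mult_left_mono)
    moreover have "\<sigma> powr (1 - \<beta>) * (5 * L + B) \<ge> 2 * L" using s1 L B
      by (smt (verit) mult_right_mono mult_cancel_right1)
    ultimately show ?thesis unfolding K' by (simp add: algebra_simps)
  qed
  have "L * r^2 + C * r powr (\<beta> + 1) = r^2 * (L + C * r powr (\<beta> - 1))" unfolding rsplit by (simp add: algebra_simps)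
  also have "\<dots> \<le> r^2 * (L + C * (\<epsilon> powr (\<beta> - 1) * \<sigma> powr (1 - \<beta>)))"
    using rp es Cpos by (intro mult_left_mono add_left_mono) (auto intro: mult_left_mono)
  also have "\<dots> \<le> r^2 * ((1 - \<alpha>) / 2 * \<sigma>)" using main by (intro mult_left_mono) auto
  finally have fin: "L * r^2 + C * r powr (\<beta> + 1) \<le> r^2 * ((1 - \<alpha>) / 2 * \<sigma>)" .
  have "r^2 * ((1 - \<alpha>) / 2 * \<sigma>) = (1 - \<alpha>) / 2 * \<sigma> * r^2" by simp
  then show ?thesis using lhs fin by linarith
qed

theorem theorem1:
  fixes m :: nat
    and f :: "nat \<Rightarrow> real^'n \<Rightarrow> real"
    and gradf :: "nat \<Rightarrow> real^'n \<Rightarrow> real^'n"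
    and h :: "nat \<Rightarrow> real^'n \<Rightarrow> ereal"
    and g :: "nat \<Rightarrow> real^'n \<Rightarrow> real \<Rightarrow> real^'n"
    and L M \<beta> :: "nat \<Rightarrow> real"
    and Bk :: "nat \<Rightarrow> real^'n^'n"
    and Bbar \<alpha> \<epsilon> \<sigma> lam :: real
    and xk xbar :: "real^'n"
  assumes m: "m \<ge> 1"
    and grad: "\<And>j x. j \<in> {1..m} \<Longrightarrow> (f j has_derivative (\<lambda>v. gradf j x \<bullet> v)) (at x)"
    and hconv: "\<And>j. j \<in> {1..m} \<Longrightarrow> ext_convex (h j)"
    and glim: "\<And>j x. j \<in> {1..m} \<Longrightarrow> ((g j x) \<longlongrightarrow> gradf j x) (at 0 within {0..1})"
    and alpha: "0 < \<alpha>" "\<alpha> < 1"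
    and eps: "0 < \<epsilon>" "\<epsilon> < 1"
    and sigma: "\<sigma> \<ge> 1"
    and lambda: "0 < lam" "lam \<le> \<epsilon> / (\<sigma> * sqrt (real CARD('n)))"
    and Bpsd: "\<And>j. j \<in> {1..m} \<Longrightarrow> sym_psd (Bk j)"
    and xk_dom: "\<And>j. j \<in> {1..m} \<Longrightarrow> h j xk < \<infinity>"
    and xbar_min: "\<And>x. Phi m (\<lambda>j. g j xk lam) Bk h xk xbar + ereal (\<sigma> / 2 * (norm (xbar - xk))\<^sup>2)
                       \<le> Phi m (\<lambda>j. g j xk lam) Bk h xk x + ereal (\<sigma> / 2 * (norm (x - xk))\<^sup>2)"
    and A1: "Bbar \<ge> 0" "\<And>j. j \<in> {1..m} \<Longrightarrow> spec_norm (Bk j) \<le> Bbar"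
    and par: "\<And>j. j \<in> {1..m} \<Longrightarrow> L j > 0 \<and> M j > 0 \<and> 0 < \<beta> j \<and> \<beta> j \<le> 1"
    and A2: "\<And>j x y. j \<in> {1..m} \<Longrightarrow>
               f j y \<le> f j x + gradf j x \<bullet> (y - x) + L j / 2 * (norm (y - x))\<^sup>2
                        + M j / (\<beta> j + 1) * norm (y - x) powr (\<beta> j + 1)"
    and A3: "\<And>j x l. j \<in> {1..m} \<Longrightarrow> 0 < l \<Longrightarrow> l \<le> 1 \<Longrightarrow>
               norm (gradf j x - g j x l)
                 \<le> l * (sqrt (real CARD('n)) * L j / 2)
                   + sqrt (real CARD('n)) * (M j / (\<beta> j + 1)) * l powr (\<beta> j)"
    and step3: "\<sigma> * norm (xbar - xk) \<ge> \<epsilon>"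
    and sigma_big: "\<sigma> \<ge> (MAX j\<in>{1..m}.
               ((5 * L j + Bbar) / (1 - \<alpha>)
                + (2 * real CARD('n) powr ((1 - \<beta> j) / 2) * M j + 2 * M j)
                  / ((\<beta> j + 1) * (1 - \<alpha>)) * \<epsilon> powr (\<beta> j - 1)) powr (1 / \<beta> j))"
  shows "\<forall>j\<in>{1..m}.
           ereal (f j xbar) + h j xbar
             \<le> ereal (f j xk - \<alpha> / 2 * \<sigma> * (norm (xbar - xk))\<^sup>2) + h j xk
         \<and> ereal (f j xbar) + h j xbar
             \<le> ereal (f j xk - \<alpha> * \<epsilon>\<^sup>2 / (2 * \<sigma>)) + h j xk"
proof
  fix j assume j: "j \<in> {1..m}"
  define d where "d = xbar - xk"
  define r where "r = norm d"
  define N where "N = real CARD('n)"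
  define gk where "gk = g j xk lam"
  have N1: "N \<ge> 1" unfolding N_def by simp
  have r0: "r > 0"
  proof -
    have "\<sigma> * r > 0" using step3 eps unfolding r_def d_def by linarith
    thus ?thesis using sigma by (simp add: zero_less_mult_iff)
  qed
  have fin: "finite {1..m}" "{1..m} \<noteq> {}" using m by auto
  obtain hk where hk: "h j xk = ereal hk"
    using xk_dom[OF j] hconv[OF j] unfolding ext_convex_def by (cases "h j xk") auto
  have Phik: "Phi m (\<lambda>j. g j xk lam) Bk h xk xk = 0"
  proof -
    have "\<And>i. i \<in> {1..m} \<Longrightarrow> ereal ((g i xk lam + (1/2) *\<^sub>R (Bk i *v (xk - xk))) \<bullet> (xk - xk)) + h i xk - h i xk = 0"
    proof -
      fix i assume i: "i \<in> {1..m}"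
      obtain v where "h i xk = ereal v"
        using xk_dom[OF i] hconv[OF i] unfolding ext_convex_def by (cases "h i xk") auto
      thus "ereal ((g i xk lam + (1/2) *\<^sub>R (Bk i *v (xk - xk))) \<bullet> (xk - xk)) + h i xk - h i xk = 0" by simp
    qed
    hence "(\<lambda>i. ereal ((g i xk lam + (1/2) *\<^sub>R (Bk i *v (xk - xk))) \<bullet> (xk - xk)) + h i xk - h i xk) ` {1..m} = {0}"
      using fin by auto
    thus ?thesis unfolding Phi_def by simp
  qed
  define a where "a = (gk + (1/2) *\<^sub>R (Bk j *v d)) \<bullet> d"
  have termle: "ereal a + h j xbar - h j xk \<le> Phi m (\<lambda>j. g j xk lam) Bk h xk xbar"
    unfolding Phi_def a_def gk_def d_def using fin j by (intro Max_ge) auto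
  have Pb: "Phi m (\<lambda>j. g j xk lam) Bk h xk xbar + ereal (\<sigma> / 2 * r^2) \<le> 0"
    using xbar_min[of xk] Phik unfolding r_def d_def by simp
  have T: "ereal a + h j xbar - h j xk + ereal (\<sigma> / 2 * r^2) \<le> 0"
    using termle Pb by (metis add_right_mono order_trans)
  obtain hb where hb: "h j xbar = ereal hb"
  proof (cases "h j xbar")
    case (real x) thus ?thesis using that by simp
  next
    case PInf thus ?thesis using T hk by simp
  next
    case MInf thus ?thesis using hconv[OF j] unfolding ext_convex_def by simp
  qed
  have P: "a + hb - hk + \<sigma> / 2 * r^2 \<le> 0" using T hb hk by simp
  have psd: "0 \<le> d \<bullet> (Bk j *v d)" using Bpsd[OF j] unfolding sym_psd_def by blast
  have a_eq: "a = gk \<bullet> d + 1/2 * (d \<bullet> (Bk j *v d))"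
    unfolding a_def by (simp add: inner_add_left inner_commute[of _ d] inner_add_right)
  have P2: "gk \<bullet> d + hb - hk + \<sigma> / 2 * r^2 \<le> 0" using P psd a_eq by linarith
  have pj: "L j > 0" "M j > 0" "0 < \<beta> j" "\<beta> j \<le> 1" using par[OF j] by auto
  have lam1: "lam \<le> 1"
  proof -
    have "sqrt N \<ge> 1" using N1 by simp
    hence "\<sigma> * sqrt N \<ge> 1" using sigma by (metis mult_mono' mult_1_left order.trans zero_le_one less_imp_le order.refl) 
    hence "\<epsilon> / (\<sigma> * sqrt N) \<le> \<epsilon>" using eps by (simp add: divide_le_eq)
    thus ?thesis using lambda eps unfolding N_def by linarith
  qed
  define E where "E = norm (gradf j xk - gk)"
  have E: "E \<le> lam * (sqrt N * L j / 2) + sqrt N * (M j / (\<beta> j + 1)) * lam powr (\<beta> j)"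
    unfolding E_def gk_def N_def using A3[OF j lambda(1) lam1] .
  have gd: "gradf j xk \<bullet> d \<le> gk \<bullet> d + E * r"
  proof -
    have "(gradf j xk - gk) \<bullet> d \<le> E * r" unfolding E_def r_def by (rule norm_cauchy_schwarz)
    thus ?thesis by (simp add: inner_diff_left)
  qed
  have A2j: "f j xbar \<le> f j xk + gradf j xk \<bullet> d + L j / 2 * r^2 + M j / (\<beta> j + 1) * r powr (\<beta> j + 1)"
    using A2[OF j, of xbar xk] unfolding d_def r_def .
  define K where "K = (5 * L j + Bbar) / (1 - \<alpha>)
                + (2 * N powr ((1 - \<beta> j) / 2) * M j + 2 * M j)
                  / ((\<beta> j + 1) * (1 - \<alpha>)) * \<epsilon> powr (\<beta> j - 1)"
  have sK: "\<sigma> \<ge> K powr (1 / \<beta> j)"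
  proof -
    have "K powr (1 / \<beta> j) \<le> (MAX j\<in>{1..m}.
               ((5 * L j + Bbar) / (1 - \<alpha>)
                + (2 * real CARD('n) powr ((1 - \<beta> j) / 2) * M j + 2 * M j)
                  / ((\<beta> j + 1) * (1 - \<alpha>)) * \<epsilon> powr (\<beta> j - 1)) powr (1 / \<beta> j))"
      unfolding K_def N_def using fin j by (intro Max_ge) auto
    thus ?thesis using sigma_big by linarith
  qed
  have st: "\<sigma> * r \<ge> \<epsilon>" using step3 unfolding r_def d_def .
  have core: "E * r + L j / 2 * r^2 + M j / (\<beta> j + 1) * r powr (\<beta> j + 1) \<le> (1 - \<alpha>) / 2 * \<sigma> * r^2"
    using real_core[OF r0 sigma eps(1) st pj(3,4) pj(1) pj(2) alpha A1(1) N1 _ _ E K_def sK] lambda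
    unfolding N_def by simp
  have R1: "f j xbar + hb \<le> f j xk - \<alpha> / 2 * \<sigma> * r^2 + hk"
  proof -
    have "(1 - \<alpha>) / 2 * \<sigma> * r^2 = \<sigma> / 2 * r^2 - \<alpha> / 2 * \<sigma> * r^2" by (simp add: field_simps)
    thus ?thesis using core A2j gd P2 by linarith
  qed
  have R2: "\<alpha> * \<epsilon>^2 / (2 * \<sigma>) \<le> \<alpha> / 2 * \<sigma> * r^2"
  proof -
    have "\<epsilon>^2 \<le> (\<sigma> * r)^2" using st eps by (intro power_mono) auto
    hence "\<epsilon>^2 / \<sigma> \<le> \<sigma> * r^2" using sigma by (simp add: divide_le_eq power2_eq_square mult_ac)
    hence "\<alpha> / 2 * (\<epsilon>^2 / \<sigma>) \<le> \<alpha> / 2 * (\<sigma> * r^2)" using alpha by (intro mult_left_mono) auto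
    thus ?thesis by (simp add: mult_ac)
  qed
  show "ereal (f j xbar) + h j xbar
             \<le> ereal (f j xk - \<alpha> / 2 * \<sigma> * (norm (xbar - xk))\<^sup>2) + h j xk
         \<and> ereal (f j xbar) + h j xbar
             \<le> ereal (f j xk - \<alpha> * \<epsilon>\<^sup>2 / (2 * \<sigma>)) + h j xk"
    using R1 R2 hb hk unfolding r_def d_def by simp
qed

end
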